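(* Let $f\colon[a,b]\to\mathbb{R}$ be Laplace integrable on $[a,b]$ and let $F(x)=\int_a^xf$ for $x\in[a,b]$. Then $LD_1F=f$ almost everywhere on $[a,b]$.
   Context: Laplace derivative: for $F$ Perron integrable near $x$, $LD_1F(x)$ is the common value, when both exist and are equal, of $\lim_{s\to\infty}s^2\int_0^\delta e^{-st}[F(x+t)-F(x)]dt$ and $\lim_{s\to\infty}(-s^2)\int_0^\delta e^{-st}[F(x-t)-F(x)]dt$ for some $\delta>0$ (one-sided at endpoints). Lower/upper derivates $\underline{LD}_1,\overline{LD}_1$ use $\liminf$/$\limsup$, minimum/maximum over the two sides. Laplace integral: a major function of $f$ is a continuous $U$ on $[a,b]$ with $\underline{LD}_1U\geqslant f$ and $\underline{LD}_1U>-\infty$ everywhere; a minor function is a continuous $V$ with $\overline{LD}_1V\leqslant f$ and $\overline{LD}_1V<\infty$ everywhere; $f$ is Laplace integrable if $\sup_V(V(b)-V(a))=\inf_U(U(b)-U(a))$ is finite, the value being $\int_a^bf$. *)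

theory Defs
  imports "HOL-Analysis.Analysis"
begin

definition lap_right :: "(real \<Rightarrow> real) \<Rightarrow> real \<Rightarrow> real \<Rightarrow> real \<Rightarrow> real" where
  "lap_right F x d s = s\<^sup>2 * integral {0..d} (\<lambda>t. exp (- (s * t)) * (F (x + t) - F x))"

definition lap_left :: "(real \<Rightarrow> real) \<Rightarrow> real \<Rightarrow> real \<Rightarrow> real \<Rightarrow> real" where
  "lap_left F x d s = - (s\<^sup>2) * integral {0..d} (\<lambda>t. exp (- (s * t)) * (F (x - t) - F x))"

text \<open>F has first Laplace derivative L at x, relative to [a,b] (one-sided at endpoints).
  Perron integrability = Henstock-Kurzweil integrability (integrable_on).\<close>

definition has_LD :: "(real \<Rightarrow> real) \<Rightarrow> real \<Rightarrow> real \<Rightarrow> real \<Rightarrow> real \<Rightarrow> bool" where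
  "has_LD F a b x L \<longleftrightarrow> x \<in> {a..b} \<and>
     (\<exists>d>0.
        (x < b \<longrightarrow> x + d \<le> b \<and> F integrable_on {x..x+d} \<and>
                    (lap_right F x d \<longlongrightarrow> L) at_top) \<and>
        (a < x \<longrightarrow> a \<le> x - d \<and> F integrable_on {x-d..x} \<and>
                    (lap_left F x d \<longlongrightarrow> L) at_top))"

text \<open>The window used is the
  maximal one inside [a,b] (the liminf/limsup does not depend on the window for
  functions integrable on it, e.g. continuous functions).\<close>

definition lower_LD :: "(real \<Rightarrow> real) \<Rightarrow> real \<Rightarrow> real \<Rightarrow> real \<Rightarrow> ereal" where
  "lower_LD F a b x =
     (if x = a then Liminf at_top (\<lambda>s. ereal (lap_right F x (b - x) s))
      else if x = b then Liminf at_top (\<lambda>s. ereal (lap_left F x (x - a) s))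
      else min (Liminf at_top (\<lambda>s. ereal (lap_right F x (b - x) s)))
               (Liminf at_top (\<lambda>s. ereal (lap_left F x (x - a) s))))"

definition upper_LD :: "(real \<Rightarrow> real) \<Rightarrow> real \<Rightarrow> real \<Rightarrow> real \<Rightarrow> ereal" where
  "upper_LD F a b x =
     (if x = a then Limsup at_top (\<lambda>s. ereal (lap_right F x (b - x) s))
      else if x = b then Limsup at_top (\<lambda>s. ereal (lap_left F x (x - a) s))
      else max (Limsup at_top (\<lambda>s. ereal (lap_right F x (b - x) s)))
               (Limsup at_top (\<lambda>s. ereal (lap_left F x (x - a) s))))"

definition laplace_major :: "(real \<Rightarrow> real) \<Rightarrow> real \<Rightarrow> real \<Rightarrow> (real \<Rightarrow> real) \<Rightarrow> bool" where
  "laplace_major f a b U \<longleftrightarrow> continuous_on {a..b} U \<and>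
     (\<forall>x\<in>{a..b}. lower_LD U a b x \<ge> ereal (f x) \<and> lower_LD U a b x > -\<infinity>)"

definition laplace_minor :: "(real \<Rightarrow> real) \<Rightarrow> real \<Rightarrow> real \<Rightarrow> (real \<Rightarrow> real) \<Rightarrow> bool" where
  "laplace_minor f a b V \<longleftrightarrow> continuous_on {a..b} V \<and>
     (\<forall>x\<in>{a..b}. upper_LD V a b x \<le> ereal (f x) \<and> upper_LD V a b x < \<infinity>)"

definition laplace_upper :: "(real \<Rightarrow> real) \<Rightarrow> real \<Rightarrow> real \<Rightarrow> ereal" where
  "laplace_upper f a b = (INF U\<in>{U. laplace_major f a b U}. ereal (U b - U a))"

definition laplace_lower :: "(real \<Rightarrow> real) \<Rightarrow> real \<Rightarrow> real \<Rightarrow> ereal" where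
  "laplace_lower f a b = (SUP V\<in>{V. laplace_minor f a b V}. ereal (V b - V a))"

definition laplace_integrable :: "(real \<Rightarrow> real) \<Rightarrow> real \<Rightarrow> real \<Rightarrow> bool" where
  "laplace_integrable f a b \<longleftrightarrow>
     laplace_lower f a b = laplace_upper f a b \<and> \<bar>laplace_upper f a b\<bar> \<noteq> \<infinity>"

definition laplace_integral :: "(real \<Rightarrow> real) \<Rightarrow> real \<Rightarrow> real \<Rightarrow> real" where
  "laplace_integral f a b = real_of_ereal (laplace_upper f a b)"

end

theory Submission
  imports Defs "HOL-Real_Asymp.Real_Asymp"
begin


definition lapJ :: "(real \<Rightarrow> real) \<Rightarrow> real \<Rightarrow> real \<Rightarrow> real \<Rightarrow> real \<Rightarrow> real" where
  "lapJ F x u v s = s\<^sup>2 * integral {u..v} (\<lambda>t. exp (- (s * t)) * (F (x + t) - F x))"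

lemma cont_shift:
  fixes F :: "real \<Rightarrow> real"
  assumes "continuous_on {x..x+d} F"
  shows "continuous_on {0..d} (\<lambda>t. exp (- (s * t)) * (F (x + t) - F x))"
proof -
  have "continuous_on {0..d} (\<lambda>t. F (x + t))"
    by (rule continuous_on_compose2[OF assms], intro continuous_intros, auto)
  then show ?thesis by (intro continuous_intros) auto
qed

lemma int_shift:
  fixes F :: "real \<Rightarrow> real"
  assumes "continuous_on {x..x+d} F" "0 \<le> u" "v \<le> d"
  shows "(\<lambda>t. exp (- (s * t)) * (F (x + t) - F x)) integrable_on {u..v}"
proof -
  have "continuous_on {u..v} (\<lambda>t. exp (- (s * t)) * (F (x + t) - F x))"
    by (rule continuous_on_subset[OF cont_shift[OF assms(1)]]) (use assms in auto)
  then show ?thesis by (rule integrable_continuous_interval)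
qed

lemma int_shift0:
  fixes F :: "real \<Rightarrow> real"
  assumes "continuous_on {x..x+d} F"
  shows "(\<lambda>t. exp (- (s * t)) * (F (x + t) - F x)) integrable_on {0..d}"
  using int_shift[OF assms, of 0 d] by simp

lemma lap_split:
  assumes "continuous_on {x..x+d} F" "0 \<le> e" "e \<le> d"
  shows "lap_right F x d s = lap_right F x e s + lapJ F x e d s"
proof -
  have "integral {0..e} (\<lambda>t. exp (- (s * t)) * (F (x + t) - F x)) +
        integral {e..d} (\<lambda>t. exp (- (s * t)) * (F (x + t) - F x)) =
        integral {0..d} (\<lambda>t. exp (- (s * t)) * (F (x + t) - F x))"
    by (rule Henstock_Kurzweil_Integration.integral_combine) (use assms int_shift[OF assms(1), of 0 d] in auto)
  note eq = this
  show ?thesis unfolding lap_right_def lapJ_def eq[symmetric] by (simp add: distrib_left)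
qed

lemma lap_tail:
  assumes "continuous_on {x..x+d} F" "0 < e" "e \<le> d"
  shows "((\<lambda>s. lapJ F x e d s) \<longlongrightarrow> 0) at_top"
proof -
  have "compact (F ` {x..x+d})" by (rule compact_continuous_image[OF assms(1)]) auto
  then obtain B where B: "B > 0" "\<And>y. y \<in> {x..x+d} \<Longrightarrow> \<bar>F y\<bar> \<le> B"
    using compact_imp_bounded bounded_pos by (metis image_eqI real_norm_def)
  have ev: "\<forall>\<^sub>F s in at_top. norm (lapJ F x e d s) \<le> s\<^sup>2 * exp (- (s * e)) * (2 * B * (d - e))"
    using eventually_ge_at_top[of "0::real"]
  proof eventually_elim
    case (elim s)
    have bd: "norm (exp (- (s * t)) * (F (x + t) - F x)) \<le> exp (- (s * e)) * (2 * B)"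
      if t: "t \<in> {e..d}" for t
    proof -
      have "\<bar>F (x + t) - F x\<bar> \<le> 2 * B"
        using B(2)[of "x+t"] B(2)[of x] t assms by auto
      moreover have "exp (- (s * t)) \<le> exp (- (s * e))"
        using t elim by (auto intro: mult_left_mono)
      ultimately show ?thesis
        by (simp add: abs_mult) (rule mult_mono, auto)
    qed
    have "norm (integral {e..d} (\<lambda>t. exp (- (s * t)) * (F (x + t) - F x)))
          \<le> exp (- (s * e)) * (2 * B) * Henstock_Kurzweil_Integration.content {e..d}"
      by (rule has_integral_bound_real[where S="{}"])
         (use B bd int_shift[OF assms(1), of e d s] assms in auto)
    then have "norm (integral {e..d} (\<lambda>t. exp (- (s * t)) * (F (x + t) - F x)))
          \<le> exp (- (s * e)) * (2 * B) * (d - e)" using assms by simp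
    then show ?case unfolding lapJ_def
      by (simp add: abs_mult mult.assoc mult_left_mono)
  qed
  have "((\<lambda>s. s\<^sup>2 * exp (- (s * e))) \<longlongrightarrow> 0) at_top" using assms(2) by real_asymp
  then have "((\<lambda>s. s\<^sup>2 * exp (- (s * e)) * (2 * B * (d - e))) \<longlongrightarrow> 0) at_top"
    using tendsto_mult[of _ 0 at_top "\<lambda>_. 2 * B * (d - e)"] by auto
  then show ?thesis by (rule Lim_null_comparison[OF ev])
qed

lemma lap_window:
  assumes "continuous_on {x..x+d} F" "0 < e" "e \<le> d"
  shows "((\<lambda>s. lap_right F x d s - lap_right F x e s) \<longlongrightarrow> 0) at_top"
  using lap_tail[OF assms] lap_split[OF assms(1) _ assms(3)] assms(2) by simp

lemma lap_diff:
  assumes "continuous_on {x..x+d} F" "continuous_on {x..x+d} G" "0 \<le> d"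
  shows "lap_right (\<lambda>y. F y - G y) x d s = lap_right F x d s - lap_right G x d s"
proof -
  have eq: "(\<lambda>t. exp (- (s * t)) * ((F (x + t) - G (x + t)) - (F x - G x))) =
     (\<lambda>t. exp (- (s * t)) * (F (x + t) - F x) - exp (- (s * t)) * (G (x + t) - G x))"
    by (auto simp: algebra_simps)
  have "integral {0..d} (\<lambda>t. exp (- (s * t)) * (F (x + t) - F x) - exp (- (s * t)) * (G (x + t) - G x))
     = integral {0..d} (\<lambda>t. exp (- (s * t)) * (F (x + t) - F x)) - integral {0..d} (\<lambda>t. exp (- (s * t)) * (G (x + t) - G x))"
    by (rule integral_diff) (use int_shift0 assms in auto)
  then show ?thesis unfolding lap_right_def eq by (simp add: right_diff_distrib)
qed

lemma lap_add:
  assumes "continuous_on {x..x+d} F" "continuous_on {x..x+d} G" "0 \<le> d"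
  shows "lap_right (\<lambda>y. F y + G y) x d s = lap_right F x d s + lap_right G x d s"
proof -
  have eq: "(\<lambda>t. exp (- (s * t)) * ((F (x + t) + G (x + t)) - (F x + G x))) =
     (\<lambda>t. exp (- (s * t)) * (F (x + t) - F x) + exp (- (s * t)) * (G (x + t) - G x))"
    by (auto simp: algebra_simps)
  have "integral {0..d} (\<lambda>t. exp (- (s * t)) * (F (x + t) - F x) + exp (- (s * t)) * (G (x + t) - G x))
     = integral {0..d} (\<lambda>t. exp (- (s * t)) * (F (x + t) - F x)) + integral {0..d} (\<lambda>t. exp (- (s * t)) * (G (x + t) - G x))"
    by (rule integral_add) (use int_shift0 assms in auto)
  then show ?thesis unfolding lap_right_def eq by (simp add: distrib_left)
qed

lemma lap_lin:
  assumes "s > 0" "d \<ge> 0"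
  shows "lap_right (\<lambda>y. c * y) x d s = c * (1 - exp (- (s * d)) * (s * d + 1))"
proof -
  define P where "P t = - (t / s + 1 / s\<^sup>2) * exp (- (s * t))" for t
  have "((\<lambda>t. exp (- (s * t)) * t) has_integral (P d - P 0)) {0..d}"
  proof (rule fundamental_theorem_of_calculus[OF assms(2)])
    fix t assume "t \<in> {0..d}"
    have "(P has_real_derivative exp (- (s * t)) * t) (at t within {0..d})"
      unfolding P_def using assms
      by (auto intro!: derivative_eq_intros simp: field_simps power2_eq_square)
    then show "(P has_vector_derivative exp (- (s * t)) * t) (at t within {0..d})"
      by (simp add: has_real_derivative_iff_has_vector_derivative)
  qed
  then have i: "integral {0..d} (\<lambda>t. exp (- (s * t)) * t) = P d - P 0" by (rule integral_unique)
  have "(\<lambda>t. exp (- (s * t)) * (c * (x + t) - c * x)) = (\<lambda>t. c * (exp (- (s * t)) * t))"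
    by (auto simp: algebra_simps)
  then have "lap_right (\<lambda>y. c * y) x d s = s\<^sup>2 * (c * (P d - P 0))"
    unfolding lap_right_def by (simp add: i)
  also have "\<dots> = c * (1 - exp (- (s * d)) * (s * d + 1))"
    unfolding P_def using assms by (simp add: field_simps power2_eq_square)
  finally show ?thesis .
qed

lemma lap_mono:
  assumes "continuous_on {x..x+d} F" "continuous_on {x..x+d} G" "0 \<le> d"
    and "\<And>t. t \<in> {0..d} \<Longrightarrow> F (x + t) - F x \<le> G (x + t) - G x"
  shows "lap_right F x d s \<le> lap_right G x d s"
proof -
  have "integral {0..d} (\<lambda>t. exp (- (s * t)) * (F (x + t) - F x)) \<le> integral {0..d} (\<lambda>t. exp (- (s * t)) * (G (x + t) - G x))"
    by (rule integral_le) (use int_shift0 assms in \<open>auto intro!: mult_left_mono\<close>)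
  then show ?thesis unfolding lap_right_def by (simp add: mult_left_mono)
qed

lemma lap_nonneg:
  assumes "continuous_on {x..x+d} F" "0 \<le> d"
    and "\<And>t. t \<in> {0..d} \<Longrightarrow> F x \<le> F (x + t)"
  shows "0 \<le> lap_right F x d s"
proof -
  have "lap_right (\<lambda>_. 0) x d s \<le> lap_right F x d s"
    by (rule lap_mono) (use assms in auto)
  then show ?thesis by (simp add: lap_right_def)
qed

lemma lap_upper:
  assumes "continuous_on {x..x+d} F" "0 \<le> d" "s > 0" "\<eta> \<ge> 0"
    and "\<And>t. t \<in> {0..d} \<Longrightarrow> F (x + t) - F x \<le> \<eta> * t"
  shows "lap_right F x d s \<le> \<eta>"
proof -
  have "lap_right F x d s \<le> lap_right (\<lambda>y. \<eta> * y) x d s"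
    by (rule lap_mono) (use assms in \<open>auto intro!: continuous_intros simp: algebra_simps\<close>)
  also have "\<dots> = \<eta> * (1 - exp (- (s * d)) * (s * d + 1))" by (rule lap_lin) (use assms in auto)
  also have "\<dots> \<le> \<eta>" using assms by (simp add: mult_left_le)
  finally show ?thesis .
qed

lemma lap_lin_lim:
  assumes "d > 0"
  shows "((\<lambda>s. lap_right (\<lambda>y. c * y) x d s) \<longlongrightarrow> c) at_top"
proof -
  have "((\<lambda>s. 1 - exp (- (s * d)) * (s * d + 1)) \<longlongrightarrow> 1) at_top" using assms by real_asymp
  then have "((\<lambda>s. c * (1 - exp (- (s * d)) * (s * d + 1))) \<longlongrightarrow> c * 1) at_top"
    by (intro tendsto_intros)
  moreover have "\<forall>\<^sub>F s in at_top. c * (1 - exp (- (s * d)) * (s * d + 1)) = lap_right (\<lambda>y. c * y) x d s"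
    using eventually_gt_at_top[of 0] by eventually_elim (use lap_lin assms in auto)
  ultimately show ?thesis by (simp add: tendsto_cong)
qed

lemma lap_left_refl: "lap_left F x d s = lap_right (\<lambda>y. - F (- y)) (- x) d s"
proof -
  have "(\<lambda>t. exp (- (s * t)) * (- F (- (- x + t)) - - F (- (- x))))
      = (\<lambda>t. - (exp (- (s * t)) * (F (x - t) - F x)))" by (auto simp: algebra_simps)
  then show ?thesis unfolding lap_left_def lap_right_def by (simp add: integral_neg)
qed


lemma mono_from_lap:
  fixes G :: "real \<Rightarrow> real"
  assumes cont: "continuous_on {a..b} G"
    and lap: "\<And>y \<epsilon>. y \<in> {a..<b} \<Longrightarrow> \<epsilon> > 0 \<Longrightarrow> \<forall>\<^sub>F s in at_top. - \<epsilon> < lap_right G y (b - y) s"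
    and cd: "a \<le> c" "c \<le> d" "d \<le> b"
  shows "G c \<le> G d"
proof -
  have main: "G c + \<epsilon> * c \<le> G d + \<epsilon> * d" if \<epsilon>: "\<epsilon> > 0" for \<epsilon>
  proof (cases "c = d")
    case True then show ?thesis by simp
  next
    case False
    with cd have cd': "c < d" by simp
    define H where "H y = G y + \<epsilon> * y" for y
    have contH: "continuous_on {a..b} H" unfolding H_def by (intro continuous_intros cont)
    have "continuous_on {c..d} H" by (rule continuous_on_subset[OF contH]) (use cd in auto)
    then have "\<exists>x\<in>{c..d}. \<forall>y\<in>{c..d}. H y \<le> H x"
      by (intro continuous_attains_sup) (use cd' in auto)
    then obtain x0 where x0: "x0 \<in> {c..d}" "\<And>y. y \<in> {c..d} \<Longrightarrow> H y \<le> H x0" by blast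
    show ?thesis
    proof (cases "x0 = d")
      case True then show ?thesis using x0(2)[of c] cd' unfolding H_def by auto
    next
      case False
      with x0 have x0d: "x0 < d" by auto
      have sub: "{x0..x0 + (b - x0)} \<subseteq> {a..b}" using x0 cd by auto
      have cG: "continuous_on {x0..x0 + (b - x0)} G" by (rule continuous_on_subset[OF cont sub])
      have cL: "continuous_on {x0..x0 + (b - x0)} (\<lambda>y. \<epsilon> * y)" by (intro continuous_intros)
      have cH: "continuous_on {x0..x0 + (b - x0)} H" by (rule continuous_on_subset[OF contH sub])
      have e1: "\<forall>\<^sub>F s in at_top. - (\<epsilon>/4) < lap_right G x0 (b - x0) s"
        by (rule lap) (use x0 x0d cd \<epsilon> in auto)
      have "((\<lambda>s. lap_right (\<lambda>y. \<epsilon> * y) x0 (b - x0) s) \<longlongrightarrow> \<epsilon>) at_top"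
        by (rule lap_lin_lim) (use x0 x0d cd in auto)
      then have e2: "\<forall>\<^sub>F s in at_top. 3 * \<epsilon> / 4 < lap_right (\<lambda>y. \<epsilon> * y) x0 (b - x0) s"
        by (rule order_tendstoD) (use \<epsilon> in auto)
      have "((\<lambda>s. lapJ H x0 (d - x0) (b - x0) s) \<longlongrightarrow> 0) at_top"
        by (rule lap_tail[OF cH]) (use x0d cd in auto)
      then have e3: "\<forall>\<^sub>F s in at_top. lapJ H x0 (d - x0) (b - x0) s < \<epsilon> / 2"
        by (rule order_tendstoD) (use \<epsilon> in auto)
      have "\<forall>\<^sub>F s in at_top. s \<noteq> (s::real)"
        using e1 e2 e3
      proof eventually_elim
        case (elim s)
        have "lap_right H x0 (b - x0) s = lap_right G x0 (b - x0) s + lap_right (\<lambda>y. \<epsilon> * y) x0 (b - x0) s"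
          unfolding H_def by (rule lap_add[OF cG cL]) (use x0 cd in auto)
        with elim have A: "\<epsilon> / 2 < lap_right H x0 (b - x0) s" by simp
        have B: "lap_right H x0 (b - x0) s = lap_right H x0 (d - x0) s + lapJ H x0 (d - x0) (b - x0) s"
          by (rule lap_split[OF cH]) (use x0 cd in auto)
        have "lap_right H x0 (d - x0) s \<le> lap_right (\<lambda>_. 0) x0 (d - x0) s"
          by (rule lap_mono) (use x0 x0(2) cd in \<open>auto intro: continuous_on_subset[OF contH]\<close>)
        then have C: "lap_right H x0 (d - x0) s \<le> 0" by (simp add: lap_right_def)
        show ?case using A B C elim by simp
      qed
      then show ?thesis by simp
    qed
  qed
  show ?thesis
  proof (rule field_le_epsilon)
    fix e :: real assume e: "e > 0"
    define \<epsilon> where "\<epsilon> = e / (d - c + 1)"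
    have "\<epsilon> > 0" using e cd unfolding \<epsilon>_def by auto
    from main[OF this] have "G c - G d \<le> \<epsilon> * (d - c)" by (simp add: algebra_simps)
    also have "\<epsilon> * (d - c) \<le> e" unfolding \<epsilon>_def using e cd by (simp add: field_simps)
    finally show "G c \<le> G d + e" by simp
  qed
qed

lemma liminf_ge_iff:
  "ereal c \<le> Liminf at_top (\<lambda>s. ereal (u s)) \<longleftrightarrow> (\<forall>\<epsilon>>0. \<forall>\<^sub>F s in at_top. c - \<epsilon> < u s)"
proof -
  have "(\<forall>y<ereal c. \<forall>\<^sub>F s in at_top. y < ereal (u s)) \<longleftrightarrow> (\<forall>\<epsilon>>0. \<forall>\<^sub>F s in at_top. c - \<epsilon> < u s)"
  proof safe
    fix \<epsilon> :: real assume "\<forall>y<ereal c. \<forall>\<^sub>F s in at_top. y < ereal (u s)" "\<epsilon> > 0"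
    moreover have "ereal (c - \<epsilon>) < ereal c" using \<open>\<epsilon> > 0\<close> by simp
    ultimately have "\<forall>\<^sub>F s in at_top. ereal (c - \<epsilon>) < ereal (u s)" by blast
    then show "\<forall>\<^sub>F s in at_top. c - \<epsilon> < u s" by simp
  next
    fix y assume A: "\<forall>\<epsilon>>0. \<forall>\<^sub>F s in at_top. c - \<epsilon> < u s" "y < ereal c"
    show "\<forall>\<^sub>F s in at_top. y < ereal (u s)"
    proof (cases y)
      case (real r)
      with A(2) have "c - r > 0" by simp
      with A(1) have "\<forall>\<^sub>F s in at_top. c - (c - r) < u s" by blast
      then show ?thesis using real by simp
    next
      case PInf with A show ?thesis by simp
    next
      case MInf then show ?thesis by simp
    qed
  qed
  then show ?thesis by (simp add: le_Liminf_iff)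
qed

lemma limsup_le_iff:
  "Limsup at_top (\<lambda>s. ereal (u s)) \<le> ereal c \<longleftrightarrow> (\<forall>\<epsilon>>0. \<forall>\<^sub>F s in at_top. u s < c + \<epsilon>)"
proof -
  have "(\<forall>y>ereal c. \<forall>\<^sub>F s in at_top. ereal (u s) < y) \<longleftrightarrow> (\<forall>\<epsilon>>0. \<forall>\<^sub>F s in at_top. u s < c + \<epsilon>)"
  proof safe
    fix \<epsilon> :: real assume "\<forall>y>ereal c. \<forall>\<^sub>F s in at_top. ereal (u s) < y" "\<epsilon> > 0"
    moreover have "ereal (c + \<epsilon>) > ereal c" using \<open>\<epsilon> > 0\<close> by simp
    ultimately have "\<forall>\<^sub>F s in at_top. ereal (u s) < ereal (c + \<epsilon>)" by blast
    then show "\<forall>\<^sub>F s in at_top. u s < c + \<epsilon>" by simp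
  next
    fix y assume A: "\<forall>\<epsilon>>0. \<forall>\<^sub>F s in at_top. u s < c + \<epsilon>" "ereal c < y"
    show "\<forall>\<^sub>F s in at_top. ereal (u s) < y"
    proof (cases y)
      case (real r)
      with A(2) have "r - c > 0" by simp
      with A(1) have "\<forall>\<^sub>F s in at_top. u s < c + (r - c)" by blast
      then show ?thesis using real by simp
    next
      case PInf then show ?thesis by simp
    next
      case MInf with A show ?thesis by simp
    qed
  qed
  then show ?thesis by (simp add: Limsup_le_iff)
qed

definition RG where "RG U x w c \<longleftrightarrow> (\<forall>\<epsilon>>0. \<forall>\<^sub>F s in at_top. c - \<epsilon> < lap_right U x w s)"
definition LG where "LG U x w c \<longleftrightarrow> (\<forall>\<epsilon>>0. \<forall>\<^sub>F s in at_top. c - \<epsilon> < lap_left U x w s)"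
definition RL where "RL U x w c \<longleftrightarrow> (\<forall>\<epsilon>>0. \<forall>\<^sub>F s in at_top. lap_right U x w s < c + \<epsilon>)"
definition LL where "LL U x w c \<longleftrightarrow> (\<forall>\<epsilon>>0. \<forall>\<^sub>F s in at_top. lap_left U x w s < c + \<epsilon>)"

lemma lower_ge_iff:
  assumes "a < b" "y \<in> {a..b}"
  shows "ereal c \<le> lower_LD U a b y \<longleftrightarrow> ((y < b \<longrightarrow> RG U y (b - y) c) \<and> (a < y \<longrightarrow> LG U y (y - a) c))"
  using assms unfolding lower_LD_def RG_def LG_def
  by (auto simp: liminf_ge_iff)

lemma upper_le_iff:
  assumes "a < b" "y \<in> {a..b}"
  shows "upper_LD U a b y \<le> ereal c \<longleftrightarrow> ((y < b \<longrightarrow> RL U y (b - y) c) \<and> (a < y \<longrightarrow> LL U y (y - a) c))"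
  using assms unfolding upper_LD_def RL_def LL_def
  by (auto simp: limsup_le_iff)

lemma major_iff:
  assumes "a < b"
  shows "laplace_major f a b U \<longleftrightarrow> continuous_on {a..b} U \<and>
     (\<forall>y\<in>{a..b}. (y < b \<longrightarrow> RG U y (b - y) (f y)) \<and> (a < y \<longrightarrow> LG U y (y - a) (f y)))"
proof -
  have eq: "(ereal (f y) \<le> lower_LD U a b y \<and> - \<infinity> < lower_LD U a b y) \<longleftrightarrow>
     ((y < b \<longrightarrow> RG U y (b - y) (f y)) \<and> (a < y \<longrightarrow> LG U y (y - a) (f y)))" if "y \<in> {a..b}" for y
    using lower_ge_iff[OF assms that, of "f y" U] by (cases "lower_LD U a b y") auto
  show ?thesis unfolding laplace_major_def using eq by blast
qed

lemma minor_iff: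
  assumes "a < b"
  shows "laplace_minor f a b U \<longleftrightarrow> continuous_on {a..b} U \<and>
     (\<forall>y\<in>{a..b}. (y < b \<longrightarrow> RL U y (b - y) (f y)) \<and> (a < y \<longrightarrow> LL U y (y - a) (f y)))"
proof -
  have eq: "(upper_LD U a b y \<le> ereal (f y) \<and> upper_LD U a b y < \<infinity>) \<longleftrightarrow>
     ((y < b \<longrightarrow> RL U y (b - y) (f y)) \<and> (a < y \<longrightarrow> LL U y (y - a) (f y)))" if "y \<in> {a..b}" for y
    using upper_le_iff[OF assms that, of U "f y"] by (cases "upper_LD U a b y") auto
  show ?thesis unfolding laplace_minor_def using eq by blast
qed

lemma RG_window:
  assumes "continuous_on {x..x+w} U" "0 < e" "e \<le> w" "RG U x w c"
  shows "RG U x e c"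
  unfolding RG_def
proof safe
  fix \<epsilon> :: real assume \<epsilon>: "\<epsilon> > 0"
  have "\<forall>\<^sub>F s in at_top. c - \<epsilon>/2 < lap_right U x w s" using assms(4) \<epsilon> unfolding RG_def by auto
  moreover have "\<forall>\<^sub>F s in at_top. lap_right U x w s - lap_right U x e s < \<epsilon>/2"
    using order_tendstoD(2)[OF lap_window[OF assms(1-3)], of "\<epsilon>/2"] \<epsilon> by auto
  ultimately show "\<forall>\<^sub>F s in at_top. c - \<epsilon> < lap_right U x e s" by eventually_elim auto
qed

lemma RL_window:
  assumes "continuous_on {x..x+w} U" "0 < e" "e \<le> w" "RL U x w c"
  shows "RL U x e c"
  unfolding RL_def
proof safe
  fix \<epsilon> :: real assume \<epsilon>: "\<epsilon> > 0"
  have "\<forall>\<^sub>F s in at_top. lap_right U x w s < c + \<epsilon>/2" using assms(4) \<epsilon> unfolding RL_def by auto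
  moreover have "\<forall>\<^sub>F s in at_top. - \<epsilon>/2 < lap_right U x w s - lap_right U x e s"
    using order_tendstoD(1)[OF lap_window[OF assms(1-3)], of "-\<epsilon>/2"] \<epsilon> by auto
  ultimately show "\<forall>\<^sub>F s in at_top. lap_right U x e s < c + \<epsilon>" by eventually_elim auto
qed

lemma major_restrict:
  assumes "a < x" "x \<le> b" "laplace_major f a b U"
  shows "laplace_major f a x U"
proof -
  have ab: "a < b" using assms by simp
  have cont: "continuous_on {a..b} U" and P: "\<And>y. y \<in> {a..b} \<Longrightarrow> (y < b \<longrightarrow> RG U y (b - y) (f y)) \<and> (a < y \<longrightarrow> LG U y (y - a) (f y))"
    using assms(3) major_iff[OF ab] by auto
  show ?thesis unfolding major_iff[OF assms(1)]
  proof (intro conjI ballI impI)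
    show "continuous_on {a..x} U" by (rule continuous_on_subset[OF cont]) (use assms in auto)
  next
    fix y assume y: "y \<in> {a..x}" "y < x"
    have "RG U y (b - y) (f y)" using P[of y] y assms by auto
    then show "RG U y (x - y) (f y)"
      by (rule RG_window[rotated 3]) (use y assms in \<open>auto intro: continuous_on_subset[OF cont]\<close>)
  next
    fix y assume y: "y \<in> {a..x}" "a < y"
    then show "LG U y (y - a) (f y)" using P[of y] assms by auto
  qed
qed

lemma minor_restrict:
  assumes "a < x" "x \<le> b" "laplace_minor f a b U"
  shows "laplace_minor f a x U"
proof -
  have ab: "a < b" using assms by simp
  have cont: "continuous_on {a..b} U" and P: "\<And>y. y \<in> {a..b} \<Longrightarrow> (y < b \<longrightarrow> RL U y (b - y) (f y)) \<and> (a < y \<longrightarrow> LL U y (y - a) (f y))"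
    using assms(3) minor_iff[OF ab] by auto
  show ?thesis unfolding minor_iff[OF assms(1)]
  proof (intro conjI ballI impI)
    show "continuous_on {a..x} U" by (rule continuous_on_subset[OF cont]) (use assms in auto)
  next
    fix y assume y: "y \<in> {a..x}" "y < x"
    have "RL U y (b - y) (f y)" using P[of y] y assms by auto
    then show "RL U y (x - y) (f y)"
      by (rule RL_window[rotated 3]) (use y assms in \<open>auto intro: continuous_on_subset[OF cont]\<close>)
  next
    fix y assume y: "y \<in> {a..x}" "a < y"
    then show "LL U y (y - a) (f y)" using P[of y] assms by auto
  qed
qed

lemma major_minor_mono:
  assumes "a < x" "laplace_major f a x U" "laplace_minor f a x V" "a \<le> c" "c \<le> d" "d \<le> x"
  shows "U c - V c \<le> U d - V d"
proof -
  have cU: "continuous_on {a..x} U" and PU: "\<And>y. y \<in> {a..x} \<Longrightarrow> y < x \<Longrightarrow> RG U y (x - y) (f y)"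
    using assms(2) major_iff[OF assms(1)] by auto
  have cV: "continuous_on {a..x} V" and PV: "\<And>y. y \<in> {a..x} \<Longrightarrow> y < x \<Longrightarrow> RL V y (x - y) (f y)"
    using assms(3) minor_iff[OF assms(1)] by auto
  show ?thesis
  proof (rule mono_from_lap[where G="\<lambda>y. U y - V y"])
    show "continuous_on {a..x} (\<lambda>y. U y - V y)" by (intro continuous_intros cU cV)
  next
    fix y \<epsilon> :: real assume y: "y \<in> {a..<x}" and \<epsilon>: "\<epsilon> > 0"
    have sub: "{y..x} \<subseteq> {a..x}" using y by auto
    have "\<forall>\<^sub>F s in at_top. f y - \<epsilon>/2 < lap_right U y (x - y) s" using PU[of y] y \<epsilon> unfolding RG_def by auto
    moreover have "\<forall>\<^sub>F s in at_top. lap_right V y (x - y) s < f y + \<epsilon>/2" using PV[of y] y \<epsilon> unfolding RL_def by auto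
    ultimately show "\<forall>\<^sub>F s in at_top. - \<epsilon> < lap_right (\<lambda>y. U y - V y) y (x - y) s"
    proof eventually_elim
      case (elim s)
      have "lap_right (\<lambda>y. U y - V y) y (x - y) s = lap_right U y (x - y) s - lap_right V y (x - y) s"
        by (rule lap_diff) (use y in \<open>auto intro: continuous_on_subset[OF cU sub] continuous_on_subset[OF cV sub]\<close>)
      then show ?case using elim by simp
    qed
  qed (use assms in auto)
qed


lemma pair_exists:
  assumes "laplace_integrable f a b" "\<epsilon> > 0"
  shows "\<exists>U V. laplace_major f a b U \<and> laplace_minor f a b V \<and> (U b - U a) - (V b - V a) < \<epsilon>"
proof -
  from assms(1) obtain r where r: "laplace_upper f a b = ereal r" "laplace_lower f a b = ereal r"
    unfolding laplace_integrable_def by (cases "laplace_upper f a b") auto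
  have "laplace_upper f a b < ereal (r + \<epsilon>/2)" using r assms by simp
  then obtain U where U: "laplace_major f a b U" "ereal (U b - U a) < ereal (r + \<epsilon>/2)"
    unfolding laplace_upper_def by (auto simp: INF_less_iff)
  have "ereal (r - \<epsilon>/2) < laplace_lower f a b" using r assms by simp
  then obtain V where V: "laplace_minor f a b V" "ereal (r - \<epsilon>/2) < ereal (V b - V a)"
    unfolding laplace_lower_def by (auto simp: less_SUP_iff)
  show ?thesis using U V by (intro exI[of _ U] exI[of _ V]) auto
qed

locale LI =
  fixes f F :: "real \<Rightarrow> real" and a b :: real
  assumes ab: "a < b"
    and integ: "laplace_integrable f a b"
    and Fa: "F a = 0"
    and Fx: "\<forall>x\<in>{a<..b}. F x = laplace_integral f a x"
begin

lemma F_bounds: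
  assumes U: "laplace_major f a b U" and V: "laplace_minor f a b V" and x: "x \<in> {a..b}"
  shows "V x - V a \<le> F x \<and> F x \<le> U x - U a"
proof (cases "x = a")
  case True then show ?thesis using Fa by simp
next
  case False
  with x have ax: "a < x" "x \<le> b" by auto
  define L where "L = laplace_upper f a x"
  have FL: "F x = real_of_ereal L" using Fx ax unfolding L_def laplace_integral_def by auto
  have up: "L \<le> ereal (U x - U a)"
    unfolding L_def laplace_upper_def by (rule INF_lower) (use major_restrict[OF ax U] in auto)
  have Vr: "laplace_minor f a x V" by (rule minor_restrict[OF ax V])
  have lo: "ereal (V x - V a) \<le> L"
    unfolding L_def laplace_upper_def
  proof (rule INF_greatest)
    fix U' assume "U' \<in> {U. laplace_major f a x U}"
    then have "U' a - V a \<le> U' x - V x" using major_minor_mono[OF ax(1) _ Vr, of U' a x] ax by auto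
    then show "ereal (V x - V a) \<le> ereal (U' x - U' a)" by simp
  qed
  from up lo show ?thesis unfolding FL by (cases L) auto
qed

lemma pair: "\<epsilon> > 0 \<Longrightarrow> \<exists>U V. laplace_major f a b U \<and> laplace_minor f a b V \<and> (U b - U a) - (V b - V a) < \<epsilon>"
  using pair_exists[OF integ] by blast

lemma mono_UF:
  assumes U: "laplace_major f a b U" and xy: "a \<le> x" "x \<le> y" "y \<le> b"
  shows "F y - F x \<le> U y - U x"
proof (rule field_le_epsilon)
  fix e :: real assume e: "e > 0"
  obtain U' V' where UV: "laplace_major f a b U'" "laplace_minor f a b V'" "(U' b - U' a) - (V' b - V' a) < e"
    using pair[OF e] by blast
  have 1: "F y \<le> U' y - U' a" using F_bounds[OF UV(1,2), of y] xy by auto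
  have 2: "V' x - V' a \<le> F x" using F_bounds[OF UV(1,2), of x] xy by auto
  have 3: "U' y - V' y \<le> U' b - V' b" using major_minor_mono[OF ab UV(1,2), of y b] xy by auto
  have 4: "U x - V' x \<le> U y - V' y" using major_minor_mono[OF ab U UV(2), of x y] xy by auto
  show "F y - F x \<le> U y - U x + e" using 1 2 3 4 UV(3) by linarith
qed

lemma mono_FV:
  assumes V: "laplace_minor f a b V" and xy: "a \<le> x" "x \<le> y" "y \<le> b"
  shows "V y - V x \<le> F y - F x"
proof (rule field_le_epsilon)
  fix e :: real assume e: "e > 0"
  obtain U' V' where UV: "laplace_major f a b U'" "laplace_minor f a b V'" "(U' b - U' a) - (V' b - V' a) < e"
    using pair[OF e] by blast
  have 1: "V' y - V' a \<le> F y" using F_bounds[OF UV(1,2), of y] xy by auto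
  have 2: "F x \<le> U' x - U' a" using F_bounds[OF UV(1,2), of x] xy by auto
  have 3: "U' y - V' y \<le> U' b - V' b" using major_minor_mono[OF ab UV(1,2), of y b] xy by auto
  have 4: "U' x - V x \<le> U' y - V y" using major_minor_mono[OF ab UV(1) V, of x y] xy by auto
  show "V y - V x \<le> F y - F x + e" using 1 2 3 4 UV(3) by linarith
qed

lemma F_cont: "continuous_on {a..b} F"
proof -
  obtain U V where UV: "laplace_major f a b U" "laplace_minor f a b V"
    using pair[of 1] by auto
  have cU: "continuous_on {a..b} U" and cV: "continuous_on {a..b} V"
    using UV major_iff[OF ab] minor_iff[OF ab] by auto
  have bd: "\<bar>F y - F x\<bar> \<le> \<bar>U y - U x\<bar> + \<bar>V y - V x\<bar>" if "x \<in> {a..b}" "y \<in> {a..b}" for x y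
  proof (cases "x \<le> y")
    case True
    then show ?thesis using mono_UF[OF UV(1), of x y] mono_FV[OF UV(2), of x y] that by auto
  next
    case False
    then show ?thesis using mono_UF[OF UV(1), of y x] mono_FV[OF UV(2), of y x] that by auto
  qed
  show ?thesis unfolding continuous_on_def
  proof safe
    fix x assume x: "x \<in> {a..b}"
    have "((\<lambda>y. U y - U x) \<longlongrightarrow> 0) (at x within {a..b})"
      using cU x unfolding continuous_on_def by (simp add: LIM_zero)
    moreover have "((\<lambda>y. V y - V x) \<longlongrightarrow> 0) (at x within {a..b})"
      using cV x unfolding continuous_on_def by (simp add: LIM_zero)
    ultimately have g: "((\<lambda>y. \<bar>U y - U x\<bar> + \<bar>V y - V x\<bar>) \<longlongrightarrow> 0) (at x within {a..b})"
      using tendsto_add_zero tendsto_rabs_zero by blast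
    have "\<forall>\<^sub>F y in at x within {a..b}. norm (F y - F x) \<le> \<bar>U y - U x\<bar> + \<bar>V y - V x\<bar>"
      using bd x by (auto simp: eventually_at_filter intro!: always_eventually)
    from Lim_null_comparison[OF this g] show "(F \<longlongrightarrow> F x) (at x within {a..b})"
      by (simp add: LIM_zero_iff)
  qed
qed

end


lemma vitali_bound:
  fixes G :: "real \<Rightarrow> real"
  assumes mono: "\<And>x y. x \<le> y \<Longrightarrow> G x \<le> G y" and cont: "continuous_on UNIV G"
    and \<eta>: "\<eta> > 0" and ab: "a \<le> b"
  shows "\<exists>T \<in> sets lebesgue. {x \<in> {a..b}. \<forall>\<delta>>0. \<exists>h. 0 < h \<and> h < \<delta> \<and> \<eta> * h < G (x + h) - G (x - h)} \<subseteq> T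
           \<and> emeasure lebesgue T \<le> ennreal (2 * (G (b+1) - G (a-1)) / \<eta>)"
proof -
  define S where "S = {x \<in> {a..b}. \<forall>\<delta>>0. \<exists>h. 0 < h \<and> h < \<delta> \<and> \<eta> * h < G (x + h) - G (x - h)}"
  define K where "K = {(x, h). x \<in> S \<and> 0 < h \<and> h < 1 \<and> \<eta> * h < G (x + h) - G (x - h)}"
  define X where "X i = cball (fst i) (snd i)" for i :: "real \<times> real"
  have r: "\<And>i. i \<in> K \<Longrightarrow> 0 < snd i" unfolding K_def by auto
  have fine: "\<exists>i. i \<in> K \<and> x \<in> cball (fst i) (snd i) \<and> snd i < d" if "x \<in> S" "0 < d" for x d
  proof -
    have A: "\<forall>\<delta>>0. \<exists>h. 0 < h \<and> h < \<delta> \<and> \<eta> * h < G (x + h) - G (x - h)"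
      using that(1) unfolding S_def by auto
    have "min d 1 > 0" using that(2) by simp
    with A have "\<exists>h. 0 < h \<and> h < min d 1 \<and> \<eta> * h < G (x + h) - G (x - h)" by blast
    then obtain h where h: "0 < h" "h < min d 1" "\<eta> * h < G (x + h) - G (x - h)" by blast
    show ?thesis
      by (rule exI[of _ "(x, h)"]) (use h that in \<open>auto simp: K_def dist_real_def\<close>)
  qed
  obtain C where C: "countable C" "C \<subseteq> K"
     "pairwise (\<lambda>i j. disjnt (cball (fst i) (snd i)) (cball (fst j) (snd j))) C"
     "negligible (S - (\<Union>i \<in> C. cball (fst i) (snd i)))"
    using Vitali_covering_theorem_cballs[of K snd S fst, OF r fine] by blast
  define N where "N = S - (\<Union>i \<in> C. X i)"
  have Nnull: "N \<in> null_sets lebesgue" using C(4) unfolding N_def X_def negligible_iff_null_sets .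
  have Xsets: "X i \<in> sets lebesgue" for i unfolding X_def using lmeasurable_cball fmeasurableD by blast
  have Xborel: "X i \<in> sets borel" for i unfolding X_def by (simp add: borel_closed)
  have US: "(\<Union>i \<in> C. X i) \<in> sets lebesgue" by (rule sets.countable_UN'[OF C(1)]) (use Xsets in auto)
  have disj: "disjoint_family_on X C"
    using C(3) unfolding disjoint_family_on_def pairwise_def disjnt_def X_def by blast
  define T where "T = N \<union> (\<Union>i \<in> C. X i)"
  have ST: "S \<subseteq> T" unfolding T_def N_def by auto
  have Tsets: "T \<in> sets lebesgue" unfolding T_def using Nnull US by auto
  let ?\<nu> = "interval_measure G"
  have "emeasure lebesgue T \<le> emeasure lebesgue N + emeasure lebesgue (\<Union>i \<in> C. X i)"
    unfolding T_def by (rule emeasure_subadditive) (use Nnull US in auto)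
  also have "\<dots> = emeasure lebesgue (\<Union>i \<in> C. X i)" using Nnull by auto
  also have "\<dots> = (\<integral>\<^sup>+i. emeasure lebesgue (X i) \<partial>count_space C)"
    by (rule emeasure_UN_countable[OF _ C(1) disj]) (use Xsets in auto)
  also have "\<dots> \<le> (\<integral>\<^sup>+i. ennreal (2/\<eta>) * emeasure ?\<nu> (X i) \<partial>count_space C)"
  proof (rule nn_integral_mono)
    fix i assume "i \<in> space (count_space C)"
    then have i: "i \<in> K" using C(2) by auto
    then obtain x h where xh: "i = (x, h)" "0 < h" "\<eta> * h < G (x + h) - G (x - h)" unfolding K_def by auto
    have "emeasure lebesgue (X i) = emeasure lborel {x - h .. x + h}"
      unfolding X_def xh by (simp add: cball_eq_atLeastAtMost)
    also have "\<dots> = ennreal (2 * h)" using xh by simp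
    also have "\<dots> \<le> ennreal (2/\<eta> * (G (x + h) - G (x - h)))"
      using xh \<eta> by (intro ennreal_leI) (simp add: field_simps)
    also have "\<dots> = ennreal (2/\<eta>) * ennreal (G (x + h) - G (x - h))"
    proof (rule ennreal_mult)
      have "0 < \<eta> * h" using xh \<eta> by simp
      then show "0 \<le> G (x + h) - G (x - h)" using xh by linarith
    qed (use \<eta> in simp)
    also have "ennreal (G (x + h) - G (x - h)) = emeasure ?\<nu> (X i)"
      unfolding X_def xh using xh by (simp add: cball_eq_atLeastAtMost emeasure_interval_measure_Icc[OF _ mono cont])
    finally show "emeasure lebesgue (X i) \<le> ennreal (2/\<eta>) * emeasure ?\<nu> (X i)" .
  qed
  also have "\<dots> = ennreal (2/\<eta>) * (\<integral>\<^sup>+i. emeasure ?\<nu> (X i) \<partial>count_space C)"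
    by (rule nn_integral_cmult) simp
  also have "(\<integral>\<^sup>+i. emeasure ?\<nu> (X i) \<partial>count_space C) = emeasure ?\<nu> (\<Union>i \<in> C. X i)"
    by (rule emeasure_UN_countable[OF _ C(1) disj, symmetric]) (use Xborel in auto)
  also have "emeasure ?\<nu> (\<Union>i \<in> C. X i) \<le> emeasure ?\<nu> {a - 1 .. b + 1}"
  proof (rule emeasure_mono)
    show "(\<Union>i \<in> C. X i) \<subseteq> {a - 1 .. b + 1}"
    proof
      fix y assume "y \<in> (\<Union>i \<in> C. X i)"
      then obtain i where i: "i \<in> C" "y \<in> X i" by auto
      then have "i \<in> K" using C(2) by auto
      then obtain x h where "i = (x, h)" "x \<in> S" "h < 1" unfolding K_def by auto
      then show "y \<in> {a - 1 .. b + 1}" using i unfolding X_def S_def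
        by (auto simp: cball_eq_atLeastAtMost)
    qed
  qed simp
  also have "emeasure ?\<nu> {a - 1 .. b + 1} = ennreal (G (b + 1) - G (a - 1))"
    using ab by (simp add: emeasure_interval_measure_Icc[OF _ mono cont])
  finally have "emeasure lebesgue T \<le> ennreal (2/\<eta>) * ennreal (G (b + 1) - G (a - 1))"
    by (simp add: mult_left_mono)
  also have "\<dots> = ennreal (2/\<eta> * (G (b+1) - G (a-1)))"
    by (rule ennreal_mult[symmetric]) (use \<eta> mono[of "a-1" "b+1"] ab in auto)
  also have "2/\<eta> * (G (b+1) - G (a-1)) = 2 * (G (b+1) - G (a-1)) / \<eta>" by simp
  finally show ?thesis using ST Tsets unfolding S_def by blast
qed


lemma gap_bound:
  fixes g :: "real \<Rightarrow> real"
  assumes cg: "continuous_on {x..x+d} g" and d: "0 < \<delta>" "\<delta> \<le> d" and \<eta>: "\<eta> \<ge> 0"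
    and mono: "\<And>t. t \<in> {0..d} \<Longrightarrow> g x \<le> g (x + t)"
    and bd: "\<And>t. t \<in> {0..\<delta>} \<Longrightarrow> g (x + t) - g x \<le> \<eta> * t"
    and \<epsilon>: "\<epsilon> > 0"
  shows "\<forall>\<^sub>F s in at_top. 0 \<le> lap_right g x d s \<and> lap_right g x d s < \<eta> + \<epsilon>"
proof -
  have "\<forall>\<^sub>F s in at_top. lapJ g x \<delta> d s < \<epsilon>"
    using order_tendstoD(2)[OF lap_tail[OF cg d], of \<epsilon>] \<epsilon> by simp
  then show ?thesis using eventually_gt_at_top[of 0]
  proof eventually_elim
    case (elim s)
    have "0 \<le> lap_right g x d s" by (rule lap_nonneg[OF cg]) (use d mono in auto)
    moreover have "lap_right g x d s = lap_right g x \<delta> s + lapJ g x \<delta> d s"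
      by (rule lap_split[OF cg]) (use d in auto)
    moreover have "lap_right g x \<delta> s \<le> \<eta>"
      by (rule lap_upper) (use d elim \<eta> bd in \<open>auto intro: continuous_on_subset[OF cg]\<close>)
    ultimately show ?case using elim by simp
  qed
qed

lemma core:
  fixes F U V :: "real \<Rightarrow> real"
  assumes cF: "continuous_on {x..x+d} F" and cU: "continuous_on {x..x+d} U" and cV: "continuous_on {x..x+d} V"
    and d: "0 < \<delta>" "\<delta> \<le> d" and \<eta>: "\<eta> \<ge> 0"
    and RG: "RG U x d c" and RL: "RL V x d c"
    and m1: "\<And>t. t \<in> {0..d} \<Longrightarrow> U x - F x \<le> U (x + t) - F (x + t)"
    and m2: "\<And>t. t \<in> {0..d} \<Longrightarrow> F x - V x \<le> F (x + t) - V (x + t)"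
    and b1: "\<And>t. t \<in> {0..\<delta>} \<Longrightarrow> (U (x + t) - F (x + t)) - (U x - F x) \<le> \<eta> * t"
    and b2: "\<And>t. t \<in> {0..\<delta>} \<Longrightarrow> (F (x + t) - V (x + t)) - (F x - V x) \<le> \<eta> * t"
    and \<epsilon>: "\<epsilon> > 0"
  shows "\<forall>\<^sub>F s in at_top. \<bar>lap_right F x d s - c\<bar> < \<eta> + \<epsilon>"
proof -
  have cg: "continuous_on {x..x+d} (\<lambda>y. U y - F y)" by (intro continuous_intros cU cF)
  have ch: "continuous_on {x..x+d} (\<lambda>y. F y - V y)" by (intro continuous_intros cV cF)
  have G1: "\<forall>\<^sub>F s in at_top. 0 \<le> lap_right (\<lambda>y. U y - F y) x d s \<and> lap_right (\<lambda>y. U y - F y) x d s < \<eta> + \<epsilon>/2"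
    by (rule gap_bound[OF cg d \<eta>]) (use m1 b1 \<epsilon> in auto)
  have G2: "\<forall>\<^sub>F s in at_top. 0 \<le> lap_right (\<lambda>y. F y - V y) x d s \<and> lap_right (\<lambda>y. F y - V y) x d s < \<eta> + \<epsilon>/2"
    by (rule gap_bound[OF ch d \<eta>]) (use m2 b2 \<epsilon> in auto)
  have R1: "\<forall>\<^sub>F s in at_top. c - \<epsilon>/2 < lap_right U x d s" using RG \<epsilon> unfolding RG_def by simp
  have R2: "\<forall>\<^sub>F s in at_top. lap_right V x d s < c + \<epsilon>/2" using RL \<epsilon> unfolding RL_def by simp
  from G1 G2 R1 R2 show ?thesis
  proof eventually_elim
    case (elim s)
    have "lap_right (\<lambda>y. U y - F y) x d s = lap_right U x d s - lap_right F x d s"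
      by (rule lap_diff[OF cU cF]) (use d in auto)
    moreover have "lap_right (\<lambda>y. F y - V y) x d s = lap_right F x d s - lap_right V x d s"
      by (rule lap_diff[OF cF cV]) (use d in auto)
    ultimately show ?case using elim by (simp add: abs_less_iff)
  qed
qed


lemma LG_refl: "LG U x w c \<longleftrightarrow> RG (\<lambda>y. - U (- y)) (- x) w c"
  unfolding LG_def RG_def lap_left_refl ..

lemma LL_refl: "LL U x w c \<longleftrightarrow> RL (\<lambda>y. - U (- y)) (- x) w c"
  unfolding LL_def RL_def lap_left_refl ..

lemma refl_cont:
  fixes F :: "real \<Rightarrow> real"
  assumes "continuous_on {a..b} F" "{u..v} \<subseteq> {-b..-a}"
  shows "continuous_on {u..v} (\<lambda>y. - F (- y))"
proof -
  have "continuous_on {u..v} (\<lambda>y. F (- y))"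
    by (rule continuous_on_compose2[OF assms(1)], intro continuous_intros) (use assms(2) in auto)
  then show ?thesis by (intro continuous_intros)
qed

context LI
begin

lemma good_point:
  assumes x: "a < x" "x < b"
    and UV: "\<And>n. laplace_major f a b (U n)" "\<And>n. laplace_minor f a b (V n)"
    and \<eta>: "\<And>n. \<eta> n \<ge> 0"
    and good: "\<And>\<epsilon>. \<epsilon> > 0 \<Longrightarrow> \<exists>n \<delta>. \<eta> n < \<epsilon> \<and> \<delta> > 0 \<and>
        (\<forall>h. 0 < h \<and> h < \<delta> \<longrightarrow> (U n (x + h) - F (x + h)) - (U n (x - h) - F (x - h)) \<le> \<eta> n * h
                               \<and> (F (x + h) - V n (x + h)) - (F (x - h) - V n (x - h)) \<le> \<eta> n * h)"
  shows "has_LD F a b x (f x)"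
proof -
  define d where "d = min (b - x) (x - a)"
  have d: "d > 0" "x + d \<le> b" "a \<le> x - d" using x unfolding d_def by auto
  have cF: "continuous_on {a..b} F" by (rule F_cont)
  have cU: "continuous_on {a..b} (U n)" for n using UV(1)[of n] major_iff[OF ab] by auto
  have cV: "continuous_on {a..b} (V n)" for n using UV(2)[of n] minor_iff[OF ab] by auto
  have PU: "RG (U n) x (b - x) (f x) \<and> LG (U n) x (x - a) (f x)" for n
    using UV(1)[of n] major_iff[OF ab] x by auto
  have PV: "RL (V n) x (b - x) (f x) \<and> LL (V n) x (x - a) (f x)" for n
    using UV(2)[of n] minor_iff[OF ab] x by auto
  have subR: "{x..x + d} \<subseteq> {a..b}" using d x by auto
  have subR': "{x..x + (b - x)} \<subseteq> {a..b}" using d x by auto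
  have subL: "{- x..- x + d} \<subseteq> {-b..-a}" using d x by auto
  have subL': "{- x..- x + (x - a)} \<subseteq> {-b..-a}" using d x by auto
  have right: "((\<lambda>s. lap_right F x d s) \<longlongrightarrow> f x) at_top"
    unfolding tendsto_iff dist_real_def
  proof safe
    fix \<epsilon> :: real assume \<epsilon>: "\<epsilon> > 0"
    obtain n \<delta> where n: "\<eta> n < \<epsilon>/2" "\<delta> > 0"
      and hb: "\<forall>h. 0 < h \<and> h < \<delta> \<longrightarrow> (U n (x + h) - F (x + h)) - (U n (x - h) - F (x - h)) \<le> \<eta> n * h
                               \<and> (F (x + h) - V n (x + h)) - (F (x - h) - V n (x - h)) \<le> \<eta> n * h"
      using good[of "\<epsilon>/2"] \<epsilon> by auto
    define \<delta>' where "\<delta>' = min d (\<delta>/2)"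
    have \<delta>': "0 < \<delta>'" "\<delta>' \<le> d" "\<delta>' < \<delta>" using d n unfolding \<delta>'_def by auto
    have "\<forall>\<^sub>F s in at_top. \<bar>lap_right F x d s - f x\<bar> < \<eta> n + \<epsilon>/2"
    proof (rule core[OF _ _ _ \<delta>'(1,2) \<eta>])
      show "continuous_on {x..x + d} F" "continuous_on {x..x + d} (U n)" "continuous_on {x..x + d} (V n)"
        using continuous_on_subset[OF cF subR] continuous_on_subset[OF cU subR] continuous_on_subset[OF cV subR] by auto
      show "RG (U n) x d (f x)"
        by (rule RG_window[OF continuous_on_subset[OF cU subR']]) (use d PU in auto)
      show "RL (V n) x d (f x)"
        by (rule RL_window[OF continuous_on_subset[OF cV subR']]) (use d PV in auto)
    next
      fix t assume t: "t \<in> {0..d}"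
      show "U n x - F x \<le> U n (x + t) - F (x + t)" using mono_UF[OF UV(1)[of n], of x "x + t"] t d x by auto
      show "F x - V n x \<le> F (x + t) - V n (x + t)" using mono_FV[OF UV(2)[of n], of x "x + t"] t d x by auto
    next
      fix t assume t: "t \<in> {0..\<delta>'}"
      show "U n (x + t) - F (x + t) - (U n x - F x) \<le> \<eta> n * t"
      proof (cases "t = 0")
        case False
        then have "(U n (x + t) - F (x + t)) - (U n (x - t) - F (x - t)) \<le> \<eta> n * t" using hb t \<delta>' by auto
        moreover have "U n (x - t) - F (x - t) \<le> U n x - F x" using mono_UF[OF UV(1)[of n], of "x - t" x] t \<delta>' d x by auto
        ultimately show ?thesis by linarith
      qed simp
      show "F (x + t) - V n (x + t) - (F x - V n x) \<le> \<eta> n * t"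
      proof (cases "t = 0")
        case False
        then have "(F (x + t) - V n (x + t)) - (F (x - t) - V n (x - t)) \<le> \<eta> n * t" using hb t \<delta>' by auto
        moreover have "F (x - t) - V n (x - t) \<le> F x - V n x" using mono_FV[OF UV(2)[of n], of "x - t" x] t \<delta>' d x by auto
        ultimately show ?thesis by linarith
      qed simp
    qed (use \<epsilon> in auto)
    then show "\<forall>\<^sub>F s in at_top. \<bar>lap_right F x d s - f x\<bar> < \<epsilon>"
      by eventually_elim (use n in auto)
  qed
  have left: "((\<lambda>s. lap_left F x d s) \<longlongrightarrow> f x) at_top"
    unfolding tendsto_iff dist_real_def lap_left_refl
  proof safe
    fix \<epsilon> :: real assume \<epsilon>: "\<epsilon> > 0"
    obtain n \<delta> where n: "\<eta> n < \<epsilon>/2" "\<delta> > 0"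
      and hb: "\<forall>h. 0 < h \<and> h < \<delta> \<longrightarrow> (U n (x + h) - F (x + h)) - (U n (x - h) - F (x - h)) \<le> \<eta> n * h
                               \<and> (F (x + h) - V n (x + h)) - (F (x - h) - V n (x - h)) \<le> \<eta> n * h"
      using good[of "\<epsilon>/2"] \<epsilon> by auto
    define \<delta>' where "\<delta>' = min d (\<delta>/2)"
    have \<delta>': "0 < \<delta>'" "\<delta>' \<le> d" "\<delta>' < \<delta>" using d n unfolding \<delta>'_def by auto
    have "\<forall>\<^sub>F s in at_top. \<bar>lap_right (\<lambda>y. - F (- y)) (- x) d s - f x\<bar> < \<eta> n + \<epsilon>/2"
    proof (rule core[OF _ _ _ \<delta>'(1,2) \<eta>, where U="\<lambda>y. - U n (- y)" and V="\<lambda>y. - V n (- y)"])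
      show "continuous_on {- x..- x + d} (\<lambda>y. - F (- y))"
        "continuous_on {- x..- x + d} (\<lambda>y. - U n (- y))" "continuous_on {- x..- x + d} (\<lambda>y. - V n (- y))"
        using refl_cont[OF cF subL] refl_cont[OF cU subL] refl_cont[OF cV subL] by auto
      show "RG (\<lambda>y. - U n (- y)) (- x) d (f x)"
        by (rule RG_window[OF refl_cont[OF cU subL']]) (use d PU LG_refl in auto)
      show "RL (\<lambda>y. - V n (- y)) (- x) d (f x)"
        by (rule RL_window[OF refl_cont[OF cV subL']]) (use d PV LL_refl in auto)
    next
      fix t assume t: "t \<in> {0..d}"
      show "- U n (- (- x)) - - F (- (- x)) \<le> - U n (- (- x + t)) - - F (- (- x + t))"
        using mono_UF[OF UV(1)[of n], of "x - t" x] t d x by auto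
      show "- F (- (- x)) - - V n (- (- x)) \<le> - F (- (- x + t)) - - V n (- (- x + t))"
        using mono_FV[OF UV(2)[of n], of "x - t" x] t d x by auto
    next
      fix t assume t: "t \<in> {0..\<delta>'}"
      show "- U n (- (- x + t)) - - F (- (- x + t)) - (- U n (- (- x)) - - F (- (- x))) \<le> \<eta> n * t"
      proof (cases "t = 0")
        case False
        then have "(U n (x + t) - F (x + t)) - (U n (x - t) - F (x - t)) \<le> \<eta> n * t" using hb t \<delta>' by auto
        moreover have "U n x - F x \<le> U n (x + t) - F (x + t)" using mono_UF[OF UV(1)[of n], of x "x + t"] t \<delta>' d x by auto
        ultimately show ?thesis by simp
      qed simp
      show "- F (- (- x + t)) - - V n (- (- x + t)) - (- F (- (- x)) - - V n (- (- x))) \<le> \<eta> n * t"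
      proof (cases "t = 0")
        case False
        then have "(F (x + t) - V n (x + t)) - (F (x - t) - V n (x - t)) \<le> \<eta> n * t" using hb t \<delta>' by auto
        moreover have "F x - V n x \<le> F (x + t) - V n (x + t)" using mono_FV[OF UV(2)[of n], of x "x + t"] t \<delta>' d x by auto
        ultimately show ?thesis by simp
      qed simp
    qed (use \<epsilon> in auto)
    then show "\<forall>\<^sub>F s in at_top. \<bar>lap_right (\<lambda>y. - F (- y)) (- x) d s - f x\<bar> < \<epsilon>"
      by eventually_elim (use n in auto)
  qed
  have iR: "F integrable_on {x..x + d}" by (rule integrable_continuous_interval, rule continuous_on_subset[OF cF subR])
  have iL: "F integrable_on {x - d..x}" by (rule integrable_continuous_interval, rule continuous_on_subset[OF cF]) (use d x in auto)
  show ?thesis unfolding has_LD_def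
    using x d right left iR iL by (intro conjI exI[of _ d]) auto
qed

end


theorem theorem5p5:
  fixes f F :: "real \<Rightarrow> real" and a b :: real
  assumes "a < b"
    and "laplace_integrable f a b"
    and "F a = 0"
    and "\<forall>x\<in>{a<..b}. F x = laplace_integral f a x"
  shows "AE x in lebesgue. x \<in> {a..b} \<longrightarrow> has_LD F a b x (f x)"
proof -
  interpret LI f F a b using assms by unfold_locales auto
  have "\<forall>n::nat. \<exists>p. laplace_major f a b (fst p) \<and> laplace_minor f a b (snd p) \<and>
          (fst p b - fst p a) - (snd p b - snd p a) < (1/4)^n"
  proof
    fix n :: nat
    obtain U V where "laplace_major f a b U" "laplace_minor f a b V" "(U b - U a) - (V b - V a) < (1/4)^n"
      using pair[of "(1/4)^n"] by auto
    then show "\<exists>p. laplace_major f a b (fst p) \<and> laplace_minor f a b (snd p) \<and>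
          (fst p b - fst p a) - (snd p b - snd p a) < (1/4)^n"
      by (intro exI[of _ "(U, V)"]) auto
  qed
  then obtain P where P: "\<And>n. laplace_major f a b (fst (P n)) \<and> laplace_minor f a b (snd (P n)) \<and>
          (fst (P n) b - fst (P n) a) - (snd (P n) b - snd (P n) a) < (1/4)^n"
    by metis
  define U where "U n = fst (P n)" for n
  define V where "V n = snd (P n)" for n
  have UV: "\<And>n. laplace_major f a b (U n)" "\<And>n. laplace_minor f a b (V n)"
    and gap: "\<And>n. (U n b - U n a) - (V n b - V n a) < (1/4)^n"
    using P unfolding U_def V_def by auto
  define cl where "cl y = max a (min b y)" for y
  have cl: "cl y \<in> {a..b}" for y unfolding cl_def using ab by auto
  have clmono: "y \<le> z \<Longrightarrow> cl y \<le> cl z" for y z unfolding cl_def by auto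
  have clid: "y \<in> {a..b} \<Longrightarrow> cl y = y" for y unfolding cl_def by auto
  have clcont: "continuous_on UNIV cl" unfolding cl_def by (intro continuous_intros)
  define g where "g n y = U n (cl y) - F (cl y)" for n y
  define h where "h n y = F (cl y) - V n (cl y)" for n y
  define \<eta> where "\<eta> n = (1/2::real)^n" for n
  have \<eta>pos: "\<eta> n > 0" for n unfolding \<eta>_def by simp
  have cF: "continuous_on {a..b} F" by (rule F_cont)
  have cU: "continuous_on {a..b} (U n)" for n using UV(1)[of n] major_iff[OF ab] by auto
  have cV: "continuous_on {a..b} (V n)" for n using UV(2)[of n] minor_iff[OF ab] by auto
  have gmono: "y \<le> z \<Longrightarrow> g n y \<le> g n z" for n y z
    using mono_UF[OF UV(1)[of n], of "cl y" "cl z"] cl[of y] cl[of z] clmono[of y z] unfolding g_def by auto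
  have hmono: "y \<le> z \<Longrightarrow> h n y \<le> h n z" for n y z
    using mono_FV[OF UV(2)[of n], of "cl y" "cl z"] cl[of y] cl[of z] clmono[of y z] unfolding h_def by auto
  have gcont: "continuous_on UNIV (g n)" for n
  proof -
    have "continuous_on {a..b} (\<lambda>y. U n y - F y)" by (intro continuous_intros cU cF)
    then show ?thesis unfolding g_def by (rule continuous_on_compose2[OF _ clcont]) (use cl in auto)
  qed
  have hcont: "continuous_on UNIV (h n)" for n
  proof -
    have "continuous_on {a..b} (\<lambda>y. F y - V n y)" by (intro continuous_intros cV cF)
    then show ?thesis unfolding h_def by (rule continuous_on_compose2[OF _ clcont]) (use cl in auto)
  qed
  have clb: "cl (b + 1) = b" and cla: "cl (a - 1) = a" unfolding cl_def using ab by auto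
  define Sg where "Sg n = {x \<in> {a..b}. \<forall>\<delta>>0. \<exists>t. 0 < t \<and> t < \<delta> \<and> \<eta> n * t < g n (x + t) - g n (x - t)}" for n
  define Sh where "Sh n = {x \<in> {a..b}. \<forall>\<delta>>0. \<exists>t. 0 < t \<and> t < \<delta> \<and> \<eta> n * t < h n (x + t) - h n (x - t)}" for n
  have "\<forall>n. \<exists>T. T \<in> sets lebesgue \<and> Sg n \<union> Sh n \<subseteq> T \<and> emeasure lebesgue T \<le> ennreal (2 * \<eta> n)"
  proof
    fix n
    obtain T1 where T1: "T1 \<in> sets lebesgue" "Sg n \<subseteq> T1"
        "emeasure lebesgue T1 \<le> ennreal (2 * (g n (b+1) - g n (a-1)) / \<eta> n)"
      using vitali_bound[OF gmono gcont \<eta>pos less_imp_le[OF ab], of n] unfolding Sg_def by blast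
    obtain T2 where T2: "T2 \<in> sets lebesgue" "Sh n \<subseteq> T2"
        "emeasure lebesgue T2 \<le> ennreal (2 * (h n (b+1) - h n (a-1)) / \<eta> n)"
      using vitali_bound[OF hmono hcont \<eta>pos less_imp_le[OF ab], of n] unfolding Sh_def by blast
    have g0: "0 \<le> g n (b+1) - g n (a-1)" using gmono[of "a-1" "b+1" n] ab by simp
    have h0: "0 \<le> h n (b+1) - h n (a-1)" using hmono[of "a-1" "b+1" n] ab by simp
    have "emeasure lebesgue (T1 \<union> T2) \<le> emeasure lebesgue T1 + emeasure lebesgue T2"
      by (rule emeasure_subadditive) (use T1 T2 in auto)
    also have "\<dots> \<le> ennreal (2 * (g n (b+1) - g n (a-1)) / \<eta> n) + ennreal (2 * (h n (b+1) - h n (a-1)) / \<eta> n)"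
      using T1 T2 by (intro add_mono) auto
    also have "\<dots> = ennreal (2 * (g n (b+1) - g n (a-1)) / \<eta> n + 2 * (h n (b+1) - h n (a-1)) / \<eta> n)"
      using g0 h0 \<eta>pos[of n] by (intro ennreal_plus[symmetric]) auto
    also have "\<dots> \<le> ennreal (2 * \<eta> n)"
    proof (intro ennreal_leI)
      have "(g n (b+1) - g n (a-1)) + (h n (b+1) - h n (a-1)) = (U n b - U n a) - (V n b - V n a)"
        unfolding g_def h_def clb cla by simp
      also have "\<dots> < (1/4)^n" by (rule gap)
      also have "(1/4::real)^n = \<eta> n * \<eta> n" unfolding \<eta>_def by (simp add: power_mult_distrib[symmetric])
      finally have "(g n (b+1) - g n (a-1)) + (h n (b+1) - h n (a-1)) \<le> \<eta> n * \<eta> n" by simp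
      then have XY: "X + Y \<le> \<eta> n * \<eta> n" if "X = g n (b+1) - g n (a-1)" "Y = h n (b+1) - h n (a-1)" for X Y
        using that by simp
      have "2 * X / \<eta> n + 2 * Y / \<eta> n \<le> 2 * \<eta> n" if "X + Y \<le> \<eta> n * \<eta> n" for X Y
      proof -
        have "2 * X / \<eta> n + 2 * Y / \<eta> n = 2 * (X + Y) / \<eta> n" by (simp add: add_divide_distrib ring_distribs)
        also have "\<dots> \<le> 2 * (\<eta> n * \<eta> n) / \<eta> n"
          by (intro divide_right_mono mult_left_mono that) (use \<eta>pos[of n] in auto)
        also have "\<dots> = 2 * \<eta> n" using \<eta>pos[of n] by simp
        finally show ?thesis .
      qed
      then show "2 * (g n (b+1) - g n (a-1)) / \<eta> n + 2 * (h n (b+1) - h n (a-1)) / \<eta> n \<le> 2 * \<eta> n"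
        using XY by blast
    qed
    finally show "\<exists>T. T \<in> sets lebesgue \<and> Sg n \<union> Sh n \<subseteq> T \<and> emeasure lebesgue T \<le> ennreal (2 * \<eta> n)"
      using T1 T2 by (intro exI[of _ "T1 \<union> T2"]) auto
  qed
  then obtain E where E: "\<And>n. E n \<in> sets lebesgue" "\<And>n. Sg n \<union> Sh n \<subseteq> E n"
      "\<And>n. emeasure lebesgue (E n) \<le> ennreal (2 * \<eta> n)"
    by metis
  define B where "B = {x. \<forall>k. \<exists>n\<ge>k. x \<in> E n}"
  have Bneg: "negligible B"
    unfolding negligible_outer
  proof safe
    fix e :: real assume e: "e > 0"
    obtain k where k: "(1/2::real)^k < e/4" using real_arch_pow_inv[of "e/4" "1/2::real"] e by auto
    define T where "T = (\<Union>i. E (i + k))"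
    have BT: "B \<subseteq> T"
    proof
      fix x assume "x \<in> B"
      then obtain n where "n \<ge> k" "x \<in> E n" unfolding B_def by blast
      then show "x \<in> T" unfolding T_def by (intro UN_I[of "n - k"]) auto
    qed
    have Tsets: "T \<in> sets lebesgue" unfolding T_def using E(1) by auto
    have sm: "(\<lambda>i. 2 * \<eta> (i + k)) sums (2 * (1/2)^k * (1 / (1 - 1/2)))"
    proof -
      have "(\<lambda>i. 2 * (1/2)^k * (1/2::real)^i) sums (2 * (1/2)^k * (1 / (1 - 1/2)))"
        by (rule sums_mult[OF geometric_sums]) simp
      moreover have "(\<lambda>i. 2 * (1/2)^k * (1/2::real)^i) = (\<lambda>i. 2 * \<eta> (i + k))"
        unfolding \<eta>_def by (auto simp: power_add)
      ultimately show ?thesis by simp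
    qed
    have "emeasure lebesgue T \<le> (\<Sum>i. emeasure lebesgue (E (i + k)))"
      unfolding T_def by (rule emeasure_subadditive_countably) (use E(1) in auto)
    also have "\<dots> \<le> (\<Sum>i. ennreal (2 * \<eta> (i + k)))"
      by (intro suminf_le E(3)) auto
    also have "\<dots> = ennreal (\<Sum>i. 2 * \<eta> (i + k))"
      by (rule suminf_ennreal2) (use sm \<eta>pos in \<open>auto simp: sums_iff less_imp_le\<close>)
    also have "(\<Sum>i. 2 * \<eta> (i + k)) = 4 * (1/2)^k" using sums_unique[OF sm] by simp
    finally have Tm: "emeasure lebesgue T \<le> ennreal (4 * (1/2)^k)" .
    then have Tfin: "emeasure lebesgue T < top" using ennreal_less_top[of "4 * (1/2)^k"] by (rule le_less_trans)
    have "T \<in> lmeasurable" using Tsets Tfin by (intro fmeasurableI) auto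
    moreover have "measure lebesgue T < e"
    proof -
      have "ennreal (measure lebesgue T) \<le> ennreal (4 * (1/2)^k)"
        using Tm Tfin by (simp add: emeasure_eq_ennreal_measure)
      then have "measure lebesgue T \<le> 4 * (1/2)^k" by (simp add: ennreal_le_iff)
      then show ?thesis using k by simp
    qed
    ultimately show "\<exists>T. B \<subseteq> T \<and> T \<in> lmeasurable \<and> measure lebesgue T < e" using BT by blast
  qed
  have good: "has_LD F a b x (f x)" if x: "a < x" "x < b" "x \<notin> B" for x
  proof (rule good_point[OF x(1,2) UV less_imp_le[OF \<eta>pos]])
    fix \<epsilon> :: real assume \<epsilon>: "\<epsilon> > 0"
    from x(3) obtain k where k: "\<And>n. n \<ge> k \<Longrightarrow> x \<notin> E n" unfolding B_def by auto
    obtain m where m: "(1/2::real)^m < \<epsilon>" using real_arch_pow_inv[of \<epsilon> "1/2::real"] \<epsilon> by auto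
    define n where "n = max k m"
    have "\<eta> n \<le> (1/2)^m" unfolding \<eta>_def n_def by (rule power_decreasing) auto
    with m have \<eta>n: "\<eta> n < \<epsilon>" by simp
    have nS: "x \<notin> Sg n" "x \<notin> Sh n" using k[of n] E(2)[of n] unfolding n_def by auto
    have "\<exists>\<delta>1>0. \<forall>t. 0 < t \<and> t < \<delta>1 \<longrightarrow> g n (x + t) - g n (x - t) \<le> \<eta> n * t"
    proof -
      have "\<not> (\<forall>\<delta>>0. \<exists>t. 0 < t \<and> t < \<delta> \<and> \<eta> n * t < g n (x + t) - g n (x - t))"
        using x nS(1) unfolding Sg_def by auto
      then show ?thesis by (meson not_le)
    qed
    then obtain \<delta>1 where d1: "\<delta>1 > 0" "\<And>t. 0 < t \<Longrightarrow> t < \<delta>1 \<Longrightarrow> g n (x + t) - g n (x - t) \<le> \<eta> n * t"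
      by blast
    have "\<exists>\<delta>2>0. \<forall>t. 0 < t \<and> t < \<delta>2 \<longrightarrow> h n (x + t) - h n (x - t) \<le> \<eta> n * t"
    proof -
      have "\<not> (\<forall>\<delta>>0. \<exists>t. 0 < t \<and> t < \<delta> \<and> \<eta> n * t < h n (x + t) - h n (x - t))"
        using x nS(2) unfolding Sh_def by auto
      then show ?thesis by (meson not_le)
    qed
    then obtain \<delta>2 where d2: "\<delta>2 > 0" "\<And>t. 0 < t \<Longrightarrow> t < \<delta>2 \<Longrightarrow> h n (x + t) - h n (x - t) \<le> \<eta> n * t"
      by blast
    define \<delta> where "\<delta> = min (min \<delta>1 \<delta>2) (min (b - x) (x - a))"
    have \<delta>: "\<delta> > 0" using d1 d2 x unfolding \<delta>_def by auto
    show "\<exists>n \<delta>. \<eta> n < \<epsilon> \<and> \<delta> > 0 \<and>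
        (\<forall>t. 0 < t \<and> t < \<delta> \<longrightarrow> (U n (x + t) - F (x + t)) - (U n (x - t) - F (x - t)) \<le> \<eta> n * t
                               \<and> (F (x + t) - V n (x + t)) - (F (x - t) - V n (x - t)) \<le> \<eta> n * t)"
    proof (intro exI[of _ n] exI[of _ \<delta>] conjI allI impI \<eta>n \<delta>)
      fix t assume t: "0 < t \<and> t < \<delta>"
      then have in1: "x + t \<in> {a..b}" "x - t \<in> {a..b}" using x unfolding \<delta>_def by auto
      show "(U n (x + t) - F (x + t)) - (U n (x - t) - F (x - t)) \<le> \<eta> n * t"
        using d1(2)[of t] t in1 unfolding g_def \<delta>_def by (simp add: clid)
      show "(F (x + t) - V n (x + t)) - (F (x - t) - V n (x - t)) \<le> \<eta> n * t"
        using d2(2)[of t] t in1 unfolding h_def \<delta>_def by (simp add: clid)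
    qed
  qed
  have N: "B \<union> {a, b} \<in> null_sets lebesgue"
    using Bneg by (simp add: negligible_iff_null_sets[symmetric] negligible_Un negligible_insert)
  show ?thesis
  proof (rule AE_I'[OF N])
    show "{x \<in> space lebesgue. \<not> (x \<in> {a..b} \<longrightarrow> has_LD F a b x (f x))} \<subseteq> B \<union> {a, b}"
      using good by force
  qed
qed


end
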